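(* Let $g:\mathbb{R}\to\mathbb{R}$ be a function supported on $[-1,1]$, i.e. $g(x)=0$ for $x\notin[-1,1]$, and let $\theta^*\in\Theta_k$. Then there is $\theta'=(w',\mu',\tau')\in\Theta_k$ such that $\mu'_i\in[-1,1]$ for all $i\in[k]$ and \[ \|g-\mathcal{M}_{\theta'}\|_1\le 5\cdot\|g-\mathcal{M}_{\theta^*}\|_1. \]
   Context: $\Theta_k=\{(w,\mu,\tau): w\in\mathbb{R}^k, w_i\ge0,\sum_i w_i=1,\ \mu\in\mathbb{R}^k,\ \tau\in\mathbb{R}_{>0}^k\}$; for $\theta=(w,\mu,\tau)\in\Theta_k$, $\mathcal{M}_\theta(x)=\sum_{i=1}^k w_i\frac{\tau_i}{\sqrt{2\pi}}e^{-\tau_i^2(x-\mu_i)^2/2}$. $\|h\|_1=\int|h|$. *)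

theory Defs
  imports "HOL-Analysis.Analysis"
begin

text \<open>Parameter space Theta_k: weights, means, precisions, indexed by i < k.\<close>
definition Theta :: "nat \<Rightarrow> ((nat \<Rightarrow> real) \<times> (nat \<Rightarrow> real) \<times> (nat \<Rightarrow> real)) set" where
  "Theta k = {(w, mu, tau). (\<forall>i<k. 0 \<le> w i) \<and> (\<Sum>i<k. w i) = 1 \<and> (\<forall>i<k. 0 < tau i)}"

definition mixture :: "nat \<Rightarrow> (nat \<Rightarrow> real) \<times> (nat \<Rightarrow> real) \<times> (nat \<Rightarrow> real) \<Rightarrow> real \<Rightarrow> real" where
  "mixture k \<theta> x = (case \<theta> of (w, mu, tau) \<Rightarrow>
     (\<Sum>i<k. w i * (tau i / sqrt (2 * pi)) * exp (- ((tau i)\<^sup>2 * (x - mu i)\<^sup>2) / 2)))"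

definition L1norm :: "(real \<Rightarrow> real) \<Rightarrow> ennreal" where
  "L1norm h = (\<integral>\<^sup>+ x. ennreal \<bar>h x\<bar> \<partial>lborel)"

end

theory Submission imports Defs "HOL-Probability.Probability" begin
lemma normal_sym: "normal_density m s (2*m - x) = normal_density m s x"
  unfolding normal_density_def by (simp add: power2_commute)

lemma normal_nn1: "0 < s \<Longrightarrow> (\<integral>\<^sup>+x. ennreal (normal_density m s x) \<partial>lborel) = 1"
  by (subst nn_integral_eq_integral) auto

lemma normal_half:
  fixes m s :: real
  assumes s: "0 < s"
  shows "1 \<le> 2 * (\<integral>\<^sup>+x. ennreal (normal_density m s x) * indicator {m..} x \<partial>lborel)"
    and "1 \<le> 2 * (\<integral>\<^sup>+x. ennreal (normal_density m s x) * indicator {..m} x \<partial>lborel)"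
proof -
  let ?f = "\<lambda>x. ennreal (normal_density m s x) * indicator {m..} x"
  let ?h = "\<lambda>x. ennreal (normal_density m s x) * indicator {..m} x"
  have "(\<integral>\<^sup>+x. ?f x \<partial>lborel) = ennreal \<bar>-1\<bar> * (\<integral>\<^sup>+x. ?f (2*m + (-1) * x) \<partial>lborel)"
    by (rule nn_integral_real_affine) auto
  also have "(\<lambda>x. ?f (2*m + (-1) * x)) = ?h"
    using normal_sym[of m s] by (auto simp: fun_eq_iff indicator_def)
  finally have eq: "(\<integral>\<^sup>+x. ?f x \<partial>lborel) = (\<integral>\<^sup>+x. ?h x \<partial>lborel)" by simp
  have "1 = (\<integral>\<^sup>+x. ennreal (normal_density m s x) \<partial>lborel)" using normal_nn1[OF s] by simp
  also have "\<dots> \<le> (\<integral>\<^sup>+x. ?f x + ?h x \<partial>lborel)"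
    by (rule nn_integral_mono) (auto simp: indicator_def)
  also have "\<dots> = (\<integral>\<^sup>+x. ?f x \<partial>lborel) + (\<integral>\<^sup>+x. ?h x \<partial>lborel)"
    by (rule nn_integral_add) auto
  finally have *: "1 \<le> (\<integral>\<^sup>+x. ?f x \<partial>lborel) + (\<integral>\<^sup>+x. ?h x \<partial>lborel)" .
  then show "1 \<le> 2 * (\<integral>\<^sup>+x. ?f x \<partial>lborel)" using eq by (simp add: mult_2)
  show "1 \<le> 2 * (\<integral>\<^sup>+x. ?h x \<partial>lborel)" using * eq by (simp add: mult_2)
qed

lemma comp_eq: assumes "0 < t"
  shows "w * (t / sqrt (2 * pi)) * exp (- (t\<^sup>2 * (x - m)\<^sup>2) / 2) = w * normal_density m (1/t) x"
  using assms unfolding normal_density_def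
  by (simp add: real_sqrt_mult real_sqrt_divide power_divide field_simps)

theorem lemma17:
  fixes g :: "real \<Rightarrow> real" and k :: nat
    and \<theta>s :: "(nat \<Rightarrow> real) \<times> (nat \<Rightarrow> real) \<times> (nat \<Rightarrow> real)"
  assumes g_meas: "g \<in> borel_measurable lborel"
    and g_supp: "\<And>x. x \<notin> {-1..1} \<Longrightarrow> g x = 0"
    and \<theta>s_in: "\<theta>s \<in> Theta k"
  shows "\<exists>w' mu' tau'. (w', mu', tau') \<in> Theta k \<and> (\<forall>i<k. mu' i \<in> {-1..1}) \<and>
           L1norm (\<lambda>x. g x - mixture k (w', mu', tau') x)
             \<le> 5 * L1norm (\<lambda>x. g x - mixture k \<theta>s x)"
proof -
  obtain w mu tau where th: "\<theta>s = (w, mu, tau)" by (cases \<theta>s) auto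
  have w0: "\<And>i. i < k \<Longrightarrow> 0 \<le> w i" and t0: "\<And>i. i < k \<Longrightarrow> 0 < tau i"
    and ws: "(\<Sum>i<k. w i) = 1"
    using \<theta>s_in th by (auto simp: Theta_def)
  have gm[measurable]: "g \<in> borel_measurable borel" using g_meas by simp
  define mu' where "mu' i = (if mu i \<in> {-1..1} then mu i else 0)" for i
  define N where "N i = normal_density (mu i) (1 / tau i)" for i
  define N' where "N' i = normal_density (mu' i) (1 / tau i)" for i
  define B where "B = {i \<in> {..<k}. mu i \<notin> {-1..1}}"
  define S where "S i = (if mu i > 1 then {mu i..} else {..mu i})" for i
  define M where "M x = (\<Sum>i<k. w i * N i x)" for x
  define M' where "M' x = (\<Sum>i<k. w i * N' i x)" for x
  have fB: "finite B" and Bk: "B \<subseteq> {..<k}" by (auto simp: B_def)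
  have Nm[measurable]: "N i \<in> borel_measurable borel" "N' i \<in> borel_measurable borel" for i
    by (simp_all add: N_def N'_def)
  have N0: "0 \<le> N i x" "0 \<le> N' i x" for i x by (auto simp: N_def N'_def)
  have mixM: "mixture k \<theta>s x = M x" for x
    unfolding th mixture_def M_def N_def using comp_eq t0 by (auto intro!: sum.cong)
  have mixM': "mixture k (w, mu', tau) x = M' x" for x
    unfolding mixture_def M'_def N'_def using comp_eq t0 by (auto intro!: sum.cong)
  have Mm[measurable]: "M \<in> borel_measurable borel" "M' \<in> borel_measurable borel"
    unfolding M_def M'_def by measurable
  define \<epsilon> where "\<epsilon> = L1norm (\<lambda>x. g x - M x)"
  have int1: "(\<integral>\<^sup>+x. ennreal (N i x) \<partial>lborel) = 1" "(\<integral>\<^sup>+x. ennreal (N' i x) \<partial>lborel) = 1"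
    if "i < k" for i
    using normal_nn1[of "1 / tau i"] t0[OF that] by (auto simp: N_def N'_def)
  have pw1: "\<bar>g x - M' x\<bar> \<le> \<bar>g x - M x\<bar> + (\<Sum>i\<in>B. w i * (N i x + N' i x))" for x
  proof -
    have "M' x - M x = (\<Sum>i<k. w i * (N' i x - N i x))"
      by (simp add: M_def M'_def sum_subtractf algebra_simps)
    also have "\<dots> = (\<Sum>i\<in>B. w i * (N' i x - N i x))"
    proof -
      have z: "\<forall>i\<in>{..<k} - B. w i * (N' i x - N i x) = 0"
      proof
        fix i assume "i \<in> {..<k} - B"
        then have "mu' i = mu i" by (auto simp: B_def mu'_def)
        then show "w i * (N' i x - N i x) = 0" by (simp add: N_def N'_def)
      qed
      show ?thesis using sum.mono_neutral_right[OF finite_lessThan Bk z] by simp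
    qed
    finally have e: "M' x - M x = (\<Sum>i\<in>B. w i * (N' i x - N i x))" .
    have "\<bar>M' x - M x\<bar> \<le> (\<Sum>i\<in>B. \<bar>w i * (N' i x - N i x)\<bar>)" unfolding e by (rule sum_abs)
    also have "\<dots> \<le> (\<Sum>i\<in>B. w i * (N i x + N' i x))"
    proof (rule sum_mono)
      fix i assume "i \<in> B"
      then have "0 \<le> w i" using w0 Bk by auto
      then show "\<bar>w i * (N' i x - N i x)\<bar> \<le> w i * (N i x + N' i x)"
        using N0[of i x] by (auto simp: abs_mult intro!: mult_left_mono)
    qed
    finally show ?thesis by linarith
  qed
  have "L1norm (\<lambda>x. g x - M' x) \<le> (\<integral>\<^sup>+x. ennreal \<bar>g x - M x\<bar> + (\<Sum>i\<in>B. ennreal (w i) * (ennreal (N i x) + ennreal (N' i x))) \<partial>lborel)"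
    unfolding L1norm_def
  proof (rule nn_integral_mono)
    fix x
    have "ennreal \<bar>g x - M' x\<bar> \<le> ennreal (\<bar>g x - M x\<bar> + (\<Sum>i\<in>B. w i * (N i x + N' i x)))"
      using pw1 by (rule ennreal_leI)
    also have "\<dots> = ennreal \<bar>g x - M x\<bar> + (\<Sum>i\<in>B. ennreal (w i) * (ennreal (N i x) + ennreal (N' i x)))"
      using w0 Bk N0
      by (subst ennreal_plus) (auto intro!: sum_nonneg sum.cong simp: sum_ennreal[symmetric] ennreal_mult ennreal_plus subset_iff)
    finally show "ennreal \<bar>g x - M' x\<bar> \<le> ennreal \<bar>g x - M x\<bar> + (\<Sum>i\<in>B. ennreal (w i) * (ennreal (N i x) + ennreal (N' i x)))" .
  qed
  also have "\<dots> = \<epsilon> + (\<Sum>i\<in>B. ennreal (w i) * 2)"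
    unfolding \<epsilon>_def L1norm_def
    apply (subst nn_integral_add, simp, simp)
    apply (subst nn_integral_sum, simp)
    apply (rule arg_cong[where f="\<lambda>a. _ + a"])
    apply (rule sum.cong, simp)
    apply (subst nn_integral_cmult, simp)
    apply (subst nn_integral_add, simp, simp)
    using Bk int1 by (auto simp: one_add_one)
  finally have up: "L1norm (\<lambda>x. g x - M' x) \<le> \<epsilon> + (\<Sum>i\<in>B. ennreal (w i) * 2)" .
  define L where "L i = (\<integral>\<^sup>+x. ennreal (N i x) * indicator (S i) x \<partial>lborel)" for i
  have L1: "1 \<le> 2 * L i" if "i \<in> B" for i
  proof -
    have "0 < 1 / tau i" using that Bk t0 by auto
    then show ?thesis using normal_half[of "1 / tau i" "mu i"]
      by (auto simp: L_def S_def N_def)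
  qed
  have pw2: "(\<Sum>i\<in>B. w i * (N i x * indicator (S i) x)) \<le> \<bar>g x - M x\<bar>" for x
  proof (cases "x \<in> {-1..1}")
    case True
    then have "indicator (S i) x = (0::real)" if "i \<in> B" for i
      using that by (auto simp: S_def B_def indicator_def)
    then show ?thesis by simp
  next
    case False
    then have "\<bar>g x - M x\<bar> = M x"
    proof -
      have "0 \<le> M x" unfolding M_def using w0 N0 by (intro sum_nonneg) (simp add: mult_nonneg_nonneg)
      then show ?thesis using g_supp[OF False] by simp
    qed
    moreover have "(\<Sum>i\<in>B. w i * (N i x * indicator (S i) x)) \<le> (\<Sum>i\<in>B. w i * N i x)"
      using w0 Bk N0 by (intro sum_mono mult_left_mono) (auto simp: indicator_def)
    moreover have "(\<Sum>i\<in>B. w i * N i x) \<le> M x"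
      unfolding M_def using w0 N0 Bk by (intro sum_mono2) auto
    ultimately show ?thesis by linarith
  qed
  have "(\<Sum>i\<in>B. ennreal (w i) * L i) = (\<integral>\<^sup>+x. (\<Sum>i\<in>B. ennreal (w i) * (ennreal (N i x) * indicator (S i) x)) \<partial>lborel)"
    unfolding L_def
    by (subst nn_integral_sum) (auto intro!: sum.cong nn_integral_cmult[symmetric] simp: S_def)
  also have "\<dots> \<le> \<epsilon>"
    unfolding \<epsilon>_def L1norm_def
  proof (rule nn_integral_mono)
    fix x
    have "(\<Sum>i\<in>B. ennreal (w i) * (ennreal (N i x) * indicator (S i) x)) = ennreal (\<Sum>i\<in>B. w i * (N i x * indicator (S i) x))"
      using w0 Bk N0
      by (subst sum_ennreal[symmetric]) (auto intro!: sum.cong simp: ennreal_mult ennreal_indicator subset_iff)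
    also have "\<dots> \<le> ennreal \<bar>g x - M x\<bar>" using pw2 by (rule ennreal_leI)
    finally show "(\<Sum>i\<in>B. ennreal (w i) * (ennreal (N i x) * indicator (S i) x)) \<le> ennreal \<bar>g x - M x\<bar>" .
  qed
  finally have low: "(\<Sum>i\<in>B. ennreal (w i) * L i) \<le> \<epsilon>" .
  have "(\<Sum>i\<in>B. ennreal (w i) * 2) \<le> (\<Sum>i\<in>B. ennreal (w i) * (2 * (2 * L i)))"
  proof (rule sum_mono)
    fix i assume "i \<in> B"
    then have "2 * 1 \<le> 2 * (2 * L i)" using L1 by (intro mult_left_mono) auto
    then show "ennreal (w i) * 2 \<le> ennreal (w i) * (2 * (2 * L i))" by (intro mult_left_mono) auto
  qed
  also have "\<dots> = 4 * (\<Sum>i\<in>B. ennreal (w i) * L i)"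
    by (simp add: sum_distrib_left mult_ac)
  also have "\<dots> \<le> 4 * \<epsilon>" using low by (intro mult_left_mono) auto
  finally have "L1norm (\<lambda>x. g x - M' x) \<le> \<epsilon> + 4 * \<epsilon>" using up by (meson add_left_mono order_trans)
  also have "\<epsilon> + 4 * \<epsilon> = 5 * \<epsilon>"
  proof -
    have "(5::ennreal) = 1 + 4" by simp
    then show ?thesis by (simp only: distrib_right mult_1)
  qed
  finally have fin: "L1norm (\<lambda>x. g x - M' x) \<le> 5 * \<epsilon>" .
  show ?thesis
    apply (rule exI[of _ w], rule exI[of _ mu'], rule exI[of _ tau])
    using \<theta>s_in th fin mixM mixM'
    by (auto simp: Theta_def mu'_def \<epsilon>_def)
qed

end
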